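(* Let $P,Q$ be probability measures, $X\sim P$, and suppose $\mathbb{P}[\imath_{P\|Q}(X)=x]=0$ for every $x\in\mathbb{R}$. Then: (a) $\gamma\mapsto E_\gamma(P\|Q)$ is continuously differentiable on $(1,\infty)$ with derivative $E'_\gamma(P\|Q)\le 0$; (b) for all $\gamma>1$, $$\mathbb{F}_{P\|Q}(\log\gamma) = 1-E_\gamma(P\|Q)+\gamma E'_\gamma(P\|Q),\qquad \mathbb{F}_{P\|Q}(-\log\gamma) = -E'_\gamma(Q\|P),$$ and $\mathbb{F}_{P\|Q}(0) = 1-E_1(P\|Q)+\lim_{\gamma\downarrow1}E'_\gamma(P\|Q) = -\lim_{\gamma\downarrow1}E'_\gamma(Q\|P)$; (c) consequently, the family $\{E_\gamma(P\|Q):\gamma\ge1\}$ determines $\mathbb{F}_{P\|Q}$ on $[0,\infty)$, and the family $\{E_\gamma(Q\|P):\gamma>1\}$ determines $\mathbb{F}_{P\|Q}$ on $(-\infty,0)$.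
   Context: $\log$ is to a fixed base $b>1$. For densities $p,q$ of $P,Q$ w.r.t. a dominating measure $\mu$, $\imath_{P\|Q}:=\log p-\log q$ (in $[-\infty,\infty]$), $\mathbb{F}_{P\|Q}(x):=\mathbb{P}[\imath_{P\|Q}(X)\le x]$ with $X\sim P$. For $\gamma\ge1$, $E_\gamma(P\|Q):=\sup_U\bigl(P(U)-\gamma Q(U)\bigr)=\int(p-\gamma q)^+\,\mathrm{d}\mu$. *)

theory Defs
  imports "HOL-Analysis.Analysis"
begin

definition is_prob_density :: "'a measure \<Rightarrow> ('a \<Rightarrow> real) \<Rightarrow> bool" where
  "is_prob_density M p \<longleftrightarrow> p \<in> borel_measurable M \<and> (\<forall>x\<in>space M. 0 \<le> p x)
     \<and> integrable M p \<and> integral\<^sup>L M p = 1"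

definition dens_meas :: "'a measure \<Rightarrow> ('a \<Rightarrow> real) \<Rightarrow> 'a measure" where
  "dens_meas M p = density M (\<lambda>x. ennreal (p x))"

text \<open>Information density log p - log q in the extended reals (log to base b, log 0 = -infinity).
  The value where p = q = 0 is immaterial (null set under both measures); we set it to 0.\<close>
definition info_dens :: "real \<Rightarrow> ('a \<Rightarrow> real) \<Rightarrow> ('a \<Rightarrow> real) \<Rightarrow> 'a \<Rightarrow> ereal" where
  "info_dens b p q x =
     (if 0 < p x \<and> 0 < q x then ereal (log b (p x) - log b (q x))
      else if 0 < p x then \<infinity>
      else if 0 < q x then -\<infinity>
      else 0)"

definition info_cdf :: "real \<Rightarrow> 'a measure \<Rightarrow> ('a \<Rightarrow> real) \<Rightarrow> ('a \<Rightarrow> real) \<Rightarrow> real \<Rightarrow> real" where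
  "info_cdf b M p q t = measure (dens_meas M p) {x \<in> space M. info_dens b p q x \<le> ereal t}"

definition E_gamma :: "'a measure \<Rightarrow> ('a \<Rightarrow> real) \<Rightarrow> ('a \<Rightarrow> real) \<Rightarrow> real \<Rightarrow> real" where
  "E_gamma M p q \<gamma> = (\<integral>x. max 0 (p x - \<gamma> * q x) \<partial>M)"

definition no_real_atoms :: "real \<Rightarrow> 'a measure \<Rightarrow> ('a \<Rightarrow> real) \<Rightarrow> ('a \<Rightarrow> real) \<Rightarrow> bool" where
  "no_real_atoms b M p q \<longleftrightarrow>
     (\<forall>t::real. measure (dens_meas M p) {x \<in> space M. info_dens b p q x = ereal t} = 0)"

end

theory Submission
  imports Defs
begin


lemma dens_measure:
  assumes P: "is_prob_density M p" and A: "A \<in> sets M"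
  shows "measure (dens_meas M p) A = (\<integral>x. indicator A x * p x \<partial>M)"
proof -
  have pm[measurable]: "p \<in> borel_measurable M" and pn: "\<And>x. x \<in> space M \<Longrightarrow> 0 \<le> p x"
    using P by (auto simp: is_prob_density_def)
  have "measure (dens_meas M p) A = enn2real (\<integral>\<^sup>+ x. ennreal (p x) * indicator A x \<partial>M)"
    unfolding dens_meas_def measure_def using A by (simp add: emeasure_density)
  also have "(\<integral>\<^sup>+ x. ennreal (p x) * indicator A x \<partial>M) = (\<integral>\<^sup>+ x. ennreal (indicator A x * p x) \<partial>M)"
    by (intro nn_integral_cong) (auto simp: indicator_def)
  also have "enn2real \<dots> = (\<integral>x. indicator A x * p x \<partial>M)"
    using A pn by (intro integral_eq_nn_integral[symmetric]) (auto simp: indicator_def)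
  finally show ?thesis .
qed

lemma info_dens_meas[measurable]:
  assumes [measurable]: "p \<in> borel_measurable M" "q \<in> borel_measurable M"
  shows "info_dens b p q \<in> borel_measurable M"
  unfolding info_dens_def by measurable

lemma log_eq_iff': "1 < b \<Longrightarrow> 0 < u \<Longrightarrow> 0 < v \<Longrightarrow> log b u = log b v \<longleftrightarrow> u = v"
  by (metis log_le_cancel_iff order.antisym order.refl)

lemma pw_le:
  assumes "1 < b" "0 < g" "0 \<le> p x" "0 \<le> q x"
  shows "(if info_dens b p q x \<le> ereal (log b g) then p x else 0) = (if p x \<le> g * q x then p x else 0)"
proof -
  have "log b (p x) - log b (q x) \<le> log b g \<longleftrightarrow> p x \<le> g * q x" if "p x > 0" "q x > 0"
  proof -
    have "log b (p x) - log b (q x) = log b (p x / q x)" using that assms by (simp add: log_divide)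
    then show ?thesis using that assms by (simp add: pos_divide_le_eq)
  qed
  then show ?thesis using assms unfolding info_dens_def
    by (cases "p x > 0"; cases "q x > 0") (auto simp: not_less)
qed

lemma pw_le_neg:
  assumes "1 < b" "0 < g" "0 \<le> p x" "0 \<le> q x"
  shows "(if info_dens b p q x \<le> ereal (- log b g) then p x else 0) = (if g * p x \<le> q x then p x else 0)"
proof -
  have "log b (p x) - log b (q x) \<le> - log b g \<longleftrightarrow> g * p x \<le> q x" if "p x > 0" "q x > 0"
  proof -
    have "log b (p x) - log b (q x) = log b (p x / q x)" using that assms by (simp add: log_divide)
    moreover have "- log b g = log b (1/g)" using assms by (simp add: log_divide)
    moreover have "p x / q x \<le> 1/g \<longleftrightarrow> g * p x \<le> q x" using that assms
      by (simp add: pos_divide_le_eq pos_le_divide_eq mult.commute)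
    ultimately show ?thesis using that assms by simp
  qed
  then show ?thesis using assms unfolding info_dens_def
    by (cases "p x > 0"; cases "q x > 0") (auto simp: not_less mult_le_0_iff)
qed

lemma pw_eq:
  assumes "1 < b" "0 < g" "0 \<le> p x" "0 \<le> q x"
  shows "(if info_dens b p q x = ereal (log b g) then p x else 0) = (if p x = g * q x then p x else 0)"
proof -
  have "log b (p x) - log b (q x) = log b g \<longleftrightarrow> p x = g * q x" if "p x > 0" "q x > 0"
  proof -
    have "log b (p x) - log b (q x) = log b (p x / q x)" using that assms by (simp add: log_divide)
    moreover have "p x / q x = g \<longleftrightarrow> p x = g * q x" using that by (auto simp: divide_eq_eq)
    ultimately show ?thesis using that assms by (simp add: log_eq_iff')
  qed
  then show ?thesis using assms unfolding info_dens_def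
    by (cases "p x > 0"; cases "q x > 0") auto
qed

lemma pw_eq_neg:
  assumes "1 < b" "0 < g" "0 \<le> p x" "0 \<le> q x"
  shows "(if info_dens b p q x = ereal (- log b g) then p x else 0) = (if q x = g * p x then p x else 0)"
proof -
  have "log b (p x) - log b (q x) = - log b g \<longleftrightarrow> q x = g * p x" if "p x > 0" "q x > 0"
  proof -
    have "log b (p x) - log b (q x) = log b (p x / q x)" using that assms by (simp add: log_divide)
    moreover have "- log b g = log b (1/g)" using assms by (simp add: log_divide)
    moreover have "p x / q x = 1/g \<longleftrightarrow> q x = g * p x" using that assms by (auto simp: divide_eq_eq field_simps)
    ultimately show ?thesis using that assms by (simp add: log_eq_iff')
  qed
  then show ?thesis using assms unfolding info_dens_def
    by (cases "p x > 0"; cases "q x > 0") auto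
qed



lemma dct_at:
  fixes s :: "real \<Rightarrow> 'a \<Rightarrow> real"
  assumes sm: "\<And>h. s h \<in> borel_measurable M" and fm: "f \<in> borel_measurable M" and w: "integrable M w"
    and lim: "AE x in M. ((\<lambda>h. s h x) \<longlongrightarrow> f x) (at a within S)"
    and bd: "\<And>h. h \<in> S \<Longrightarrow> h \<noteq> a \<Longrightarrow> AE x in M. norm (s h x) \<le> w x"
  shows "((\<lambda>h. integral\<^sup>L M (s h)) \<longlongrightarrow> integral\<^sup>L M f) (at a within S)"
proof (subst tendsto_at_iff_sequentially, intro allI impI)
  fix X :: "nat \<Rightarrow> real" assume X: "\<forall>i. X i \<in> S - {a}" "X \<longlonglongrightarrow> a"
  have fX: "filterlim X (at a within S) sequentially"
    using X by (auto simp: filterlim_at intro!: always_eventually)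
  show "((\<lambda>h. integral\<^sup>L M (s h)) \<circ> X) \<longlonglongrightarrow> integral\<^sup>L M f"
    unfolding comp_def
  proof (rule integral_dominated_convergence[where w=w])
    show "AE x in M. (\<lambda>i. s (X i) x) \<longlonglongrightarrow> f x"
      using lim by eventually_elim (rule filterlim_compose[OF _ fX])
    show "AE x in M. norm (s (X i) x) \<le> w x" for i using X bd by auto
  qed (use sm fm w in auto)
qed

lemma pw_deriv:
  fixes a c g :: real
  assumes "0 \<le> c" "0 < c \<Longrightarrow> a \<noteq> g * c"
  shows "((\<lambda>y. (max 0 (a - y * c) - max 0 (a - g * c)) / (y - g)) \<longlongrightarrow> (if g * c < a then - c else 0)) (at g)"
proof (cases "c = 0")
  case True then show ?thesis by simp
next
  case False
  have cont: "((\<lambda>y. a - y * c) \<longlongrightarrow> a - g * c) (at g)" by (intro tendsto_intros)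
  show ?thesis
  proof (cases "g * c < a")
    case True
    then have "\<forall>\<^sub>F y in at g. a - y * c > 0" using cont by (intro order_tendstoD(1)) auto
    then have "\<forall>\<^sub>F y in at g. (max 0 (a - y * c) - max 0 (a - g * c)) / (y - g) = - c"
      unfolding eventually_at_filter
      by eventually_elim (use True in \<open>auto simp: field_simps\<close>)
    then show ?thesis using True by (simp add: tendsto_eventually)
  next
    case F: False
    then have lt: "a < g * c" using assms False by force
    then have "\<forall>\<^sub>F y in at g. a - y * c < 0" using cont by (intro order_tendstoD(2)) auto
    then have "\<forall>\<^sub>F y in at g. (max 0 (a - y * c) - max 0 (a - g * c)) / (y - g) = 0"
      by eventually_elim (use lt in auto)
    then show ?thesis using F by (simp add: tendsto_eventually)
  qed
qed

lemma pw_cont: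
  fixes a c g :: real
  assumes "0 \<le> c" "0 < c \<Longrightarrow> a \<noteq> g * c"
  shows "((\<lambda>y. if y * c < a then c else 0) \<longlongrightarrow> (if g * c < a then c else 0)) (at g within S)"
proof (cases "c = 0")
  case True then show ?thesis by simp
next
  case False
  have cont: "((\<lambda>y. a - y * c) \<longlongrightarrow> a - g * c) (at g within S)" by (intro tendsto_intros)
  show ?thesis
  proof (cases "g * c < a")
    case True
    then have "\<forall>\<^sub>F y in at g within S. a - y * c > 0" using cont by (intro order_tendstoD(1)) auto
    then have "\<forall>\<^sub>F y in at g within S. (if y * c < a then c else 0) = c"
      by eventually_elim auto
    then show ?thesis using True by (simp add: tendsto_eventually)
  next
    case F: False
    then have lt: "a < g * c" using assms False by force
    then have "\<forall>\<^sub>F y in at g within S. a - y * c < 0" using cont by (intro order_tendstoD(2)) auto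
    then have "\<forall>\<^sub>F y in at g within S. (if y * c < a then c else 0) = 0"
      by eventually_elim auto
    then show ?thesis using F by (simp add: tendsto_eventually)
  qed
qed

lemma pw_cont_right:
  fixes a c g :: real
  assumes "0 \<le> c"
  shows "((\<lambda>y. if y * c < a then c else 0) \<longlongrightarrow> (if g * c < a then c else 0)) (at_right g)"
proof (cases "0 < c \<longrightarrow> a \<noteq> g * c")
  case True then show ?thesis using pw_cont[OF assms] by auto
next
  case False
  then have c: "0 < c" "a = g * c" by auto
  have "\<forall>\<^sub>F y in at_right g. y > g" by (simp add: eventually_at_right_less)
  then have "\<forall>\<^sub>F y in at_right g. (if y * c < a then c else 0) = 0"
    by eventually_elim (use c in auto)
  then show ?thesis using c by (simp add: tendsto_eventually)
qed



definition Gf :: "'a measure \<Rightarrow> ('a \<Rightarrow> real) \<Rightarrow> ('a \<Rightarrow> real) \<Rightarrow> real \<Rightarrow> real" where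
  "Gf M p q g = (\<integral>x. (if g * q x < p x then q x else 0) \<partial>M)"

lemma max_diff_bound:
  fixes a c g y :: real
  assumes "0 \<le> c" "y \<noteq> g"
  shows "\<bar>(max 0 (a - y * c) - max 0 (a - g * c)) / (y - g)\<bar> \<le> c"
proof -
  have "\<bar>max 0 (a - y * c) - max 0 (a - g * c)\<bar> \<le> \<bar>(a - y * c) - (a - g * c)\<bar>" by linarith
  also have "\<dots> = \<bar>y - g\<bar> * c" using assms by (simp add: abs_mult left_diff_distrib[symmetric] abs_minus_commute)
  finally show ?thesis using assms by (simp add: abs_divide divide_le_eq mult.commute)
qed

lemma max_bound: "norm (max 0 (a - y * c)) \<le> norm (\<bar>a\<bar> + \<bar>y\<bar> * \<bar>c\<bar>)" for a y c :: real
proof -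
  have "\<bar>y * c\<bar> = \<bar>y\<bar> * \<bar>c\<bar>" by (simp add: abs_mult)
  moreover have "0 \<le> \<bar>y\<bar> * \<bar>c\<bar>" by simp
  ultimately show ?thesis by (simp add: abs_le_iff)
qed

lemma E_deriv:
  assumes pm[measurable]: "p \<in> borel_measurable M" and qm[measurable]: "q \<in> borel_measurable M"
    and pi: "integrable M p" and qi: "integrable M q"
    and qn: "\<And>x. x \<in> space M \<Longrightarrow> 0 \<le> q x"
    and ae: "AE x in M. 0 < q x \<longrightarrow> p x \<noteq> g * q x"
  shows "(E_gamma M p q has_real_derivative - Gf M p q g) (at g)"
proof -
  have int: "integrable M (\<lambda>x. max 0 (p x - y * q x))" for y
    by (rule Bochner_Integration.integrable_bound[where f="\<lambda>x. \<bar>p x\<bar> + \<bar>y\<bar> * \<bar>q x\<bar>"])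
       (use pi qi max_bound in auto)
  have eq: "(E_gamma M p q y - E_gamma M p q g) / (y - g) =
      (\<integral>x. (max 0 (p x - y * q x) - max 0 (p x - g * q x)) / (y - g) \<partial>M)" for y
    unfolding E_gamma_def using int by (simp add: integral_diff)
  have G: "- Gf M p q g = (\<integral>x. (if g * q x < p x then - q x else 0) \<partial>M)"
    unfolding Gf_def by (simp flip: integral_minus add: if_distrib cong: if_cong)
  have "((\<lambda>y. (\<integral>x. (max 0 (p x - y * q x) - max 0 (p x - g * q x)) / (y - g) \<partial>M))
      \<longlongrightarrow> (\<integral>x. (if g * q x < p x then - q x else 0) \<partial>M)) (at g within UNIV)"
  proof (rule dct_at[where w=q])
    show "AE x in M. ((\<lambda>y. (max 0 (p x - y * q x) - max 0 (p x - g * q x)) / (y - g))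
        \<longlongrightarrow> (if g * q x < p x then - q x else 0)) (at g within UNIV)"
      using ae AE_space by eventually_elim (intro pw_deriv qn; auto)
    show "AE x in M. norm ((max 0 (p x - y * q x) - max 0 (p x - g * q x)) / (y - g)) \<le> q x"
      if "y \<noteq> g" for y
      using that by (auto intro!: max_diff_bound qn simp del: abs_divide)
  qed (use qi in auto)
  then show ?thesis
    unfolding has_field_derivative_iff eq G by simp
qed

lemma G_cont:
  assumes pm[measurable]: "p \<in> borel_measurable M" and qm[measurable]: "q \<in> borel_measurable M"
    and qi: "integrable M q"
    and qn: "\<And>x. x \<in> space M \<Longrightarrow> 0 \<le> q x"
    and ae: "AE x in M. 0 < q x \<longrightarrow> p x \<noteq> g * q x"
  shows "(Gf M p q \<longlongrightarrow> Gf M p q g) (at g within S)"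
  unfolding Gf_def
proof (rule dct_at[where w=q])
  show "AE x in M. ((\<lambda>y. if y * q x < p x then q x else 0) \<longlongrightarrow> (if g * q x < p x then q x else 0)) (at g within S)"
    using ae AE_space by eventually_elim (intro pw_cont qn; auto)
qed (use qi qn in auto)

lemma G_right:
  assumes pm[measurable]: "p \<in> borel_measurable M" and qm[measurable]: "q \<in> borel_measurable M"
    and qi: "integrable M q"
    and qn: "\<And>x. x \<in> space M \<Longrightarrow> 0 \<le> q x"
  shows "(Gf M p q \<longlongrightarrow> Gf M p q g) (at_right g)"
  unfolding Gf_def
proof (rule dct_at[where w=q])
  show "AE x in M. ((\<lambda>y. if y * q x < p x then q x else 0) \<longlongrightarrow> (if g * q x < p x then q x else 0)) (at g within {g<..})"
    using AE_space by eventually_elim (intro pw_cont_right qn; auto)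
qed (use qi qn in auto)



lemma int_if:
  fixes f :: "'a \<Rightarrow> real"
  assumes "integrable M f" "(\<lambda>x. if C x then f x else 0) \<in> borel_measurable M"
  shows "integrable M (\<lambda>x. if C x then f x else 0)"
  by (rule Bochner_Integration.integrable_bound[OF assms(1) assms(2)]) (auto intro!: AE_I2)

lemma cdf_pos:
  assumes b: "1 < b" and P: "is_prob_density M p" and Q: "is_prob_density M q" and g: "0 < g"
  shows "info_cdf b M p q (log b g) = 1 - E_gamma M p q g - g * Gf M p q g"
proof -
  have pm[measurable]: "p \<in> borel_measurable M" and pn: "\<And>x. x \<in> space M \<Longrightarrow> 0 \<le> p x"
    and pi: "integrable M p" and p1: "integral\<^sup>L M p = 1"
    using P by (auto simp: is_prob_density_def)
  have qm[measurable]: "q \<in> borel_measurable M" and qn: "\<And>x. x \<in> space M \<Longrightarrow> 0 \<le> q x"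
    and qi: "integrable M q"
    using Q by (auto simp: is_prob_density_def)
  let ?A = "{x \<in> space M. info_dens b p q x \<le> ereal (log b g)}"
  have A: "?A \<in> sets M" by measurable
  have "info_cdf b M p q (log b g) = (\<integral>x. indicator ?A x * p x \<partial>M)"
    unfolding info_cdf_def by (rule dens_measure[OF P A])
  also have "\<dots> = (\<integral>x. (if p x \<le> g * q x then p x else 0) \<partial>M)"
  proof (rule Bochner_Integration.integral_cong[OF refl])
    fix x assume x: "x \<in> space M"
    have "indicator ?A x * p x = (if info_dens b p q x \<le> ereal (log b g) then p x else 0)"
      using x by (simp add: indicator_def)
    also have "\<dots> = (if p x \<le> g * q x then p x else 0)" by (rule pw_le[of b g p x q, OF b g pn[OF x] qn[OF x]])
    finally show "indicator ?A x * p x = (if p x \<le> g * q x then p x else 0)" .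
  qed
  finally have c: "info_cdf b M p q (log b g) = (\<integral>x. (if p x \<le> g * q x then p x else 0) \<partial>M)" .
  have i1: "integrable M (\<lambda>x. if p x \<le> g * q x then p x else 0)" by (rule int_if[OF pi]) measurable
  have i2: "integrable M (\<lambda>x. if g * q x < p x then p x else 0)" by (rule int_if[OF pi]) measurable
  have i3: "integrable M (\<lambda>x. if g * q x < p x then q x else 0)" by (rule int_if[OF qi]) measurable
  have "integral\<^sup>L M p = (\<integral>x. (if p x \<le> g * q x then p x else 0) + (if g * q x < p x then p x else 0) \<partial>M)"
    by (intro Bochner_Integration.integral_cong) auto
  also have "\<dots> = (\<integral>x. (if p x \<le> g * q x then p x else 0) \<partial>M) + (\<integral>x. (if g * q x < p x then p x else 0) \<partial>M)"
    using i1 i2 by (rule Bochner_Integration.integral_add)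
  finally have s: "1 = \<dots>" using p1 by simp
  have "E_gamma M p q g = (\<integral>x. (if g * q x < p x then p x else 0) - g * (if g * q x < p x then q x else 0) \<partial>M)"
    unfolding E_gamma_def by (intro Bochner_Integration.integral_cong) auto
  also have "\<dots> = (\<integral>x. (if g * q x < p x then p x else 0) \<partial>M) - (\<integral>x. g * (if g * q x < p x then q x else 0) \<partial>M)"
    by (rule Bochner_Integration.integral_diff[OF i2], rule Bochner_Integration.integrable_mult_right, rule i3)
  also have "(\<integral>x. g * (if g * q x < p x then q x else 0) \<partial>M) = g * Gf M p q g"
    unfolding Gf_def by (rule integral_mult_right_zero)
  finally have e: "E_gamma M p q g = (\<integral>x. (if g * q x < p x then p x else 0) \<partial>M) - g * Gf M p q g" .
  show ?thesis unfolding c e using s by linarith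
qed

lemma cdf_neg:
  assumes b: "1 < b" and P: "is_prob_density M p" and Q: "is_prob_density M q" and g: "0 < g"
  shows "info_cdf b M p q (- log b g) = Gf M q p g + measure (dens_meas M p) {x \<in> space M. info_dens b p q x = ereal (- log b g)}"
    and "measure (dens_meas M p) {x \<in> space M. info_dens b p q x = ereal (- log b g)} = (\<integral>x. (if q x = g * p x then p x else 0) \<partial>M)"
proof -
  have pm[measurable]: "p \<in> borel_measurable M" and pn: "\<And>x. x \<in> space M \<Longrightarrow> 0 \<le> p x"
    and pi: "integrable M p" and p1: "integral\<^sup>L M p = 1"
    using P by (auto simp: is_prob_density_def)
  have qm[measurable]: "q \<in> borel_measurable M" and qn: "\<And>x. x \<in> space M \<Longrightarrow> 0 \<le> q x"
    and qi: "integrable M q"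
    using Q by (auto simp: is_prob_density_def)
  let ?A = "{x \<in> space M. info_dens b p q x \<le> ereal (- log b g)}"
  have A: "?A \<in> sets M" by measurable
  let ?B = "{x \<in> space M. info_dens b p q x = ereal (- log b g)}"
  have B: "?B \<in> sets M" by measurable
  have "info_cdf b M p q (- log b g) = (\<integral>x. indicator ?A x * p x \<partial>M)"
    unfolding info_cdf_def by (rule dens_measure[OF P A])
  also have "\<dots> = (\<integral>x. (if g * p x \<le> q x then p x else 0) \<partial>M)"
  proof (rule Bochner_Integration.integral_cong[OF refl])
    fix x assume x: "x \<in> space M"
    have "indicator ?A x * p x = (if info_dens b p q x \<le> ereal (- log b g) then p x else 0)"
      using x by (simp add: indicator_def)
    also have "\<dots> = (if g * p x \<le> q x then p x else 0)" by (rule pw_le_neg[of b g p x q, OF b g pn[OF x] qn[OF x]])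
    finally show "indicator ?A x * p x = (if g * p x \<le> q x then p x else 0)" .
  qed
  finally have c: "info_cdf b M p q (- log b g) = (\<integral>x. (if g * p x \<le> q x then p x else 0) \<partial>M)" .
  have "measure (dens_meas M p) ?B = (\<integral>x. indicator ?B x * p x \<partial>M)"
    by (rule dens_measure[OF P B])
  also have "\<dots> = (\<integral>x. (if q x = g * p x then p x else 0) \<partial>M)"
  proof (rule Bochner_Integration.integral_cong[OF refl])
    fix x assume x: "x \<in> space M"
    have "indicator ?B x * p x = (if info_dens b p q x = ereal (- log b g) then p x else 0)"
      using x by (simp add: indicator_def)
    also have "\<dots> = (if q x = g * p x then p x else 0)" by (rule pw_eq_neg[of b g p x q, OF b g pn[OF x] qn[OF x]])
    finally show "indicator ?B x * p x = (if q x = g * p x then p x else 0)" .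
  qed
  finally show m: "measure (dens_meas M p) ?B = (\<integral>x. (if q x = g * p x then p x else 0) \<partial>M)" .
  have i1: "integrable M (\<lambda>x. if g * p x < q x then p x else 0)" by (rule int_if[OF pi]) measurable
  have i2: "integrable M (\<lambda>x. if q x = g * p x then p x else 0)" by (rule int_if[OF pi]) measurable
  have "(\<integral>x. (if g * p x \<le> q x then p x else 0) \<partial>M) =
      (\<integral>x. (if g * p x < q x then p x else 0) + (if q x = g * p x then p x else 0) \<partial>M)"
    by (intro Bochner_Integration.integral_cong) auto
  also have "\<dots> = Gf M q p g + (\<integral>x. (if q x = g * p x then p x else 0) \<partial>M)"
    unfolding Gf_def using i1 i2 by (rule Bochner_Integration.integral_add)
  finally show "info_cdf b M p q (- log b g) = Gf M q p g + measure (dens_meas M p) ?B"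
    using c m by simp
qed

lemma atom_pos:
  assumes b: "1 < b" and P: "is_prob_density M p" and Q: "is_prob_density M q" and g: "0 < g"
    and z: "measure (dens_meas M p) {x \<in> space M. info_dens b p q x = ereal (log b g)} = 0"
  shows "AE x in M. 0 < q x \<longrightarrow> p x \<noteq> g * q x"
proof -
  have pm[measurable]: "p \<in> borel_measurable M" and pn: "\<And>x. x \<in> space M \<Longrightarrow> 0 \<le> p x"
    and pi: "integrable M p"
    using P by (auto simp: is_prob_density_def)
  have qm[measurable]: "q \<in> borel_measurable M" and qn: "\<And>x. x \<in> space M \<Longrightarrow> 0 \<le> q x"
    using Q by (auto simp: is_prob_density_def)
  let ?B = "{x \<in> space M. info_dens b p q x = ereal (log b g)}"
  have B: "?B \<in> sets M" by measurable
  have "measure (dens_meas M p) ?B = (\<integral>x. indicator ?B x * p x \<partial>M)"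
    by (rule dens_measure[OF P B])
  also have "\<dots> = (\<integral>x. (if p x = g * q x then p x else 0) \<partial>M)"
  proof (rule Bochner_Integration.integral_cong[OF refl])
    fix x assume x: "x \<in> space M"
    have "indicator ?B x * p x = (if info_dens b p q x = ereal (log b g) then p x else 0)"
      using x by (simp add: indicator_def)
    also have "\<dots> = (if p x = g * q x then p x else 0)" by (rule pw_eq[of b g p x q, OF b g pn[OF x] qn[OF x]])
    finally show "indicator ?B x * p x = (if p x = g * q x then p x else 0)" .
  qed
  finally have "(\<integral>x. (if p x = g * q x then p x else 0) \<partial>M) = 0" using z by simp
  moreover have "integrable M (\<lambda>x. if p x = g * q x then p x else 0)" by (rule int_if[OF pi]) measurable
  moreover have "AE x in M. 0 \<le> (if p x = g * q x then p x else 0)" using pn by (intro AE_I2) (use pn in force)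
  ultimately have "AE x in M. (if p x = g * q x then p x else 0) = 0"
    using integral_nonneg_eq_0_iff_AE by blast
  then show ?thesis
    by eventually_elim (use g in \<open>auto split: if_splits\<close>)
qed

lemma atom_neg:
  assumes b: "1 < b" and P: "is_prob_density M p" and Q: "is_prob_density M q" and g: "0 < g"
    and z: "measure (dens_meas M p) {x \<in> space M. info_dens b p q x = ereal (- log b g)} = 0"
  shows "AE x in M. 0 < p x \<longrightarrow> q x \<noteq> g * p x"
proof -
  have pm[measurable]: "p \<in> borel_measurable M" and pn: "\<And>x. x \<in> space M \<Longrightarrow> 0 \<le> p x"
    and pi: "integrable M p"
    using P by (auto simp: is_prob_density_def)
  have "(\<integral>x. (if q x = g * p x then p x else 0) \<partial>M) = 0" using z cdf_neg(2)[OF b P Q g] by (simp only:)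
  moreover have "integrable M (\<lambda>x. if q x = g * p x then p x else 0)"
    using Q by (intro int_if[OF pi]) (auto simp: is_prob_density_def)
  moreover have "AE x in M. 0 \<le> (if q x = g * p x then p x else 0)" using pn by (intro AE_I2) (use pn in force)
  ultimately have "AE x in M. (if q x = g * p x then p x else 0) = 0"
    using integral_nonneg_eq_0_iff_AE by blast
  then show ?thesis
    by eventually_elim (auto split: if_splits)
qed



lemma core:
  assumes b: "1 < b" and P: "is_prob_density M p" and Q: "is_prob_density M q"
    and atoms: "no_real_atoms b M p q"
  shows core_d1: "\<And>g. 1 < g \<Longrightarrow> (E_gamma M p q has_real_derivative - Gf M p q g) (at g)"
    and core_d2: "\<And>g. 1 < g \<Longrightarrow> (E_gamma M q p has_real_derivative - Gf M q p g) (at g)"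
    and core_cont: "continuous_on {1<..} (\<lambda>g. - Gf M p q g)"
    and core_cdfp: "\<And>g. 0 < g \<Longrightarrow> info_cdf b M p q (log b g) = 1 - E_gamma M p q g - g * Gf M p q g"
    and core_cdfn: "\<And>g. 0 < g \<Longrightarrow> info_cdf b M p q (- log b g) = Gf M q p g"
    and core_r1: "(Gf M p q \<longlongrightarrow> Gf M p q 1) (at_right 1)"
    and core_r2: "(Gf M q p \<longlongrightarrow> Gf M q p 1) (at_right 1)"
    and core_nn: "\<And>g. 0 \<le> Gf M p q g"
proof -
  have pm[measurable]: "p \<in> borel_measurable M" and pn: "\<And>x. x \<in> space M \<Longrightarrow> 0 \<le> p x"
    and pi: "integrable M p"
    using P by (auto simp: is_prob_density_def)
  have qm[measurable]: "q \<in> borel_measurable M" and qn: "\<And>x. x \<in> space M \<Longrightarrow> 0 \<le> q x"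
    and qi: "integrable M q"
    using Q by (auto simp: is_prob_density_def)
  have z: "measure (dens_meas M p) {x \<in> space M. info_dens b p q x = ereal t} = 0" for t
    using atoms by (simp add: no_real_atoms_def)
  have ae1: "AE x in M. 0 < q x \<longrightarrow> p x \<noteq> g * q x" if "0 < g" for g
    by (rule atom_pos[OF b P Q that z])
  have ae2: "AE x in M. 0 < p x \<longrightarrow> q x \<noteq> g * p x" if "0 < g" for g
    by (rule atom_neg[OF b P Q that z])
  show "(E_gamma M p q has_real_derivative - Gf M p q g) (at g)" if "1 < g" for g
    using that by (intro E_deriv pm qm pi qi qn ae1) auto
  show "(E_gamma M q p has_real_derivative - Gf M q p g) (at g)" if "1 < g" for g
    using that by (intro E_deriv pm qm pi qi pn ae2) auto
  show "continuous_on {1<..} (\<lambda>g. - Gf M p q g)"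
    unfolding continuous_on_def
  proof
    fix g :: real assume "g \<in> {1<..}"
    then have "(Gf M p q \<longlongrightarrow> Gf M p q g) (at g within {1<..})"
      by (intro G_cont pm qm qi qn ae1) auto
    then show "((\<lambda>g. - Gf M p q g) \<longlongrightarrow> - Gf M p q g) (at g within {1<..})"
      by (rule tendsto_minus)
  qed
  show "info_cdf b M p q (log b g) = 1 - E_gamma M p q g - g * Gf M p q g" if "0 < g" for g
    by (rule cdf_pos[OF b P Q that])
  show "info_cdf b M p q (- log b g) = Gf M q p g" if "0 < g" for g
    using cdf_neg(1)[OF b P Q that] z by simp
  show "(Gf M p q \<longlongrightarrow> Gf M p q 1) (at_right 1)"
    by (rule G_right[OF pm qm qi qn])
  show "(Gf M q p \<longlongrightarrow> Gf M q p 1) (at_right 1)"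
    by (rule G_right[OF qm pm pi pn])
  show "0 \<le> Gf M p q g" for g
    unfolding Gf_def by (rule integral_nonneg_AE) (auto intro!: AE_I2 qn)
qed

lemma G_eq_from_E:
  assumes d1: "\<And>g. 1 < g \<Longrightarrow> (E1 has_real_derivative - G1 g) (at g)"
    and d2: "\<And>g. 1 < g \<Longrightarrow> (E2 has_real_derivative - G2 g) (at g)"
    and eq: "\<And>g. 1 < g \<Longrightarrow> E1 g = E2 g"
    and g: "1 < g"
  shows "G1 g = G2 g"
proof -
  have "(E2 has_real_derivative - G1 g) (at g)"
    by (rule has_field_derivative_transform_within_open[OF d1[OF g], of "{1<..}"]) (use g eq in auto)
  then have "- G1 g = - G2 g" using d2[OF g] by (rule DERIV_unique)
  then show ?thesis by simp
qed

lemma G_eq_at1: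
  fixes G1 G2 :: "real \<Rightarrow> real"
  assumes r1: "(G1 \<longlongrightarrow> G1 1) (at_right (1::real))" and r2: "(G2 \<longlongrightarrow> G2 1) (at_right 1)"
    and eq: "\<And>g. 1 < g \<Longrightarrow> G1 g = G2 g"
  shows "G1 1 = G2 (1::real)"
proof -
  have "\<forall>\<^sub>F y in at_right 1. G2 y = G1 y" using eventually_at_right_less[of "1::real"]
    by eventually_elim (use eq in auto)
  with r2 have h: "(G1 \<longlongrightarrow> G2 1) (at_right 1)" by (rule Lim_transform_eventually)
  show ?thesis using tendsto_unique[of "at_right (1::real)" G1 "G1 1" "G2 1"] r1 h by simp
qed

theorem theorem3:
  fixes M :: "'a measure" and p q :: "'a \<Rightarrow> real" and b :: real
  assumes b: "1 < b"
    and P: "is_prob_density M p" and Q: "is_prob_density M q"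
    and atoms: "no_real_atoms b M p q"
  shows "(\<exists>D DQ.
      \<comment> \<open>(a)\<close>
      (\<forall>\<gamma>>1. (E_gamma M p q has_real_derivative D \<gamma>) (at \<gamma>))
    \<and> continuous_on {1<..} D
    \<and> (\<forall>\<gamma>>1. D \<gamma> \<le> 0)
    \<and> (\<forall>\<gamma>>1. (E_gamma M q p has_real_derivative DQ \<gamma>) (at \<gamma>))
      \<comment> \<open>(b)\<close>
    \<and> (\<forall>\<gamma>>1. info_cdf b M p q (log b \<gamma>) = 1 - E_gamma M p q \<gamma> + \<gamma> * D \<gamma>)
    \<and> (\<forall>\<gamma>>1. info_cdf b M p q (- log b \<gamma>) = - DQ \<gamma>)
    \<and> (D \<longlongrightarrow> info_cdf b M p q 0 - 1 + E_gamma M p q 1) (at_right 1)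
    \<and> (DQ \<longlongrightarrow> - info_cdf b M p q 0) (at_right 1))
    \<comment> \<open>(c)\<close>
    \<and> (\<forall>(M' :: 'b measure) p' q'.
      is_prob_density M' p' \<and> is_prob_density M' q' \<and> no_real_atoms b M' p' q' \<longrightarrow>
      ((\<forall>\<gamma>\<ge>1. E_gamma M' p' q' \<gamma> = E_gamma M p q \<gamma>) \<longrightarrow>
         (\<forall>t\<ge>0. info_cdf b M' p' q' t = info_cdf b M p q t))
    \<and> ((\<forall>\<gamma>>1. E_gamma M' q' p' \<gamma> = E_gamma M q p \<gamma>) \<longrightarrow>
         (\<forall>t<0. info_cdf b M' p' q' t = info_cdf b M p q t)))"
proof -
  note c = core[OF b P Q atoms]
  have part1: "\<exists>D DQ.
      (\<forall>\<gamma>>1. (E_gamma M p q has_real_derivative D \<gamma>) (at \<gamma>))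
    \<and> continuous_on {1<..} D
    \<and> (\<forall>\<gamma>>1. D \<gamma> \<le> 0)
    \<and> (\<forall>\<gamma>>1. (E_gamma M q p has_real_derivative DQ \<gamma>) (at \<gamma>))
    \<and> (\<forall>\<gamma>>1. info_cdf b M p q (log b \<gamma>) = 1 - E_gamma M p q \<gamma> + \<gamma> * D \<gamma>)
    \<and> (\<forall>\<gamma>>1. info_cdf b M p q (- log b \<gamma>) = - DQ \<gamma>)
    \<and> (D \<longlongrightarrow> info_cdf b M p q 0 - 1 + E_gamma M p q 1) (at_right 1)
    \<and> (DQ \<longlongrightarrow> - info_cdf b M p q 0) (at_right 1)"
  proof -
    define D where "D = (\<lambda>g. - Gf M p q g)"
    define DQ where "DQ = (\<lambda>g. - Gf M q p g)"
    have c0: "info_cdf b M p q 0 = 1 - E_gamma M p q 1 - Gf M p q 1"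
      using c(4)[of 1] b by simp
    have c0': "info_cdf b M p q 0 = Gf M q p 1"
      using c(5)[of 1] b by simp
    have h1: "\<forall>\<gamma>>1. (E_gamma M p q has_real_derivative D \<gamma>) (at \<gamma>)"
      unfolding D_def using c(1) by blast
    have h2: "continuous_on {1<..} D" unfolding D_def by (rule c(3))
    have h3: "\<forall>\<gamma>>1. D \<gamma> \<le> 0" unfolding D_def using c(8) by (simp add: neg_le_0_iff_le)
    have h4: "\<forall>\<gamma>>1. (E_gamma M q p has_real_derivative DQ \<gamma>) (at \<gamma>)"
      unfolding DQ_def using c(2) by blast
    have h5: "\<forall>\<gamma>>1. info_cdf b M p q (log b \<gamma>) = 1 - E_gamma M p q \<gamma> + \<gamma> * D \<gamma>"
      unfolding D_def using c(4) by simp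
    have h6: "\<forall>\<gamma>>1. info_cdf b M p q (- log b \<gamma>) = - DQ \<gamma>"
      unfolding DQ_def using c(5) by simp
    have h7: "(D \<longlongrightarrow> info_cdf b M p q 0 - 1 + E_gamma M p q 1) (at_right 1)"
      unfolding c0 D_def using tendsto_minus[OF c(6)] by simp
    have h8: "(DQ \<longlongrightarrow> - info_cdf b M p q 0) (at_right 1)"
      unfolding c0' DQ_def using tendsto_minus[OF c(7)] by simp
    show ?thesis using h1 h2 h3 h4 h5 h6 h7 h8 by blast
  qed
  have part2: "\<forall>(M' :: 'b measure) p' q'.
      is_prob_density M' p' \<and> is_prob_density M' q' \<and> no_real_atoms b M' p' q' \<longrightarrow>
      ((\<forall>\<gamma>\<ge>1. E_gamma M' p' q' \<gamma> = E_gamma M p q \<gamma>) \<longrightarrow>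
         (\<forall>t\<ge>0. info_cdf b M' p' q' t = info_cdf b M p q t))
    \<and> ((\<forall>\<gamma>>1. E_gamma M' q' p' \<gamma> = E_gamma M q p \<gamma>) \<longrightarrow>
         (\<forall>t<0. info_cdf b M' p' q' t = info_cdf b M p q t))"
  proof (intro allI, rule impI, rule conjI)
    fix M' :: "'b measure" and p' q'
    assume H: "is_prob_density M' p' \<and> is_prob_density M' q' \<and> no_real_atoms b M' p' q'"
    note c' = core[OF b H[THEN conjunct1] H[THEN conjunct2, THEN conjunct1] H[THEN conjunct2, THEN conjunct2]]
    show "(\<forall>\<gamma>\<ge>1. E_gamma M' p' q' \<gamma> = E_gamma M p q \<gamma>) \<longrightarrow>
         (\<forall>t\<ge>0. info_cdf b M' p' q' t = info_cdf b M p q t)"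
    proof (intro impI)
      assume E: "\<forall>\<gamma>\<ge>1. E_gamma M' p' q' \<gamma> = E_gamma M p q \<gamma>"
      have Geq: "Gf M' p' q' g = Gf M p q g" if "1 < g" for g
        by (rule G_eq_from_E[OF c'(1) c(1) _ that]) (use E in auto)
      have Geq1: "Gf M' p' q' 1 = Gf M p q 1"
        by (rule G_eq_at1[OF c'(6) c(6) Geq])
      show "\<forall>t\<ge>0. info_cdf b M' p' q' t = info_cdf b M p q t"
      proof (intro allI impI)
        fix t :: real assume t: "0 \<le> t"
        define g where "g = b powr t"
        have g1: "1 \<le> g" unfolding g_def using b t by (intro ge_one_powr_ge_zero) auto
        have tg: "t = log b g" unfolding g_def using b by simp
        have GG: "Gf M' p' q' g = Gf M p q g"
        proof (cases "g = 1")
          case True then show ?thesis using Geq1 by simp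
        next
          case False then show ?thesis using g1 Geq by simp
        qed
        show "info_cdf b M' p' q' t = info_cdf b M p q t"
        proof -
          have "E_gamma M' p' q' g = E_gamma M p q g" using E g1 by blast
          moreover have "info_cdf b M' p' q' (log b g) = 1 - E_gamma M' p' q' g - g * Gf M' p' q' g"
            using c'(4)[of g] g1 by simp
          moreover have "info_cdf b M p q (log b g) = 1 - E_gamma M p q g - g * Gf M p q g"
            using c(4)[of g] g1 by simp
          ultimately show ?thesis unfolding tg using GG by simp
        qed
      qed
    qed
    show "(\<forall>\<gamma>>1. E_gamma M' q' p' \<gamma> = E_gamma M q p \<gamma>) \<longrightarrow>
         (\<forall>t<0. info_cdf b M' p' q' t = info_cdf b M p q t)"
    proof (intro impI)
      assume E: "\<forall>\<gamma>>1. E_gamma M' q' p' \<gamma> = E_gamma M q p \<gamma>"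
      have Geq: "Gf M' q' p' g = Gf M q p g" if "1 < g" for g
        by (rule G_eq_from_E[OF c'(2) c(2) _ that]) (use E in auto)
      show "\<forall>t<0. info_cdf b M' p' q' t = info_cdf b M p q t"
      proof (intro allI impI)
        fix t :: real assume t: "t < 0"
        define g where "g = b powr (- t)"
        have g1: "1 < g" unfolding g_def using b t by simp
        have tg: "t = - log b g" unfolding g_def using b by simp
        show "info_cdf b M' p' q' t = info_cdf b M p q t"
        proof -
          have "info_cdf b M' p' q' (- log b g) = Gf M' q' p' g" using c'(5)[of g] g1 by simp
          moreover have "info_cdf b M p q (- log b g) = Gf M q p g" using c(5)[of g] g1 by simp
          ultimately show ?thesis unfolding tg using Geq[OF g1] by simp
        qed
      qed
    qed
  qed
  show ?thesis by (rule conjI[OF part1 part2])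
qed

end
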